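(* Let $\mathcal U=(V,\tilde V,W,\tilde W,R)$ be a gradient space and let $\mathcal K\subseteq\mathrm{Sob}(\mathcal U)$ be a regular Rellich–Kondrachov cone containing a nonzero element. Then there exists $u\in\mathcal K$, $u\neq0$, such that $$\frac{\|g_u\|_W}{\|u\|_V}=\inf_{v\in\mathcal K,\ v\neq0}\frac{\|g_v\|_W}{\|v\|_V}>0.$$
   Context: Let $\tilde V,\tilde W$ be vector spaces over $\mathbf R$ or $\mathbf C$. A gradient relation is a set $R\subseteq\tilde V\times\tilde W$ such that (G1) if $(u,g)\in R$ and $(u',g')\in R$ then $(u+u',g+g')\in R$; (G2) if $(u,g)\in R$ and $\alpha>0$ then $(\alpha u,\alpha g)\in R$. A gradient space $\mathcal U=(V,\tilde V,W,\tilde W,R)$ consists of vector spaces $\tilde V,\tilde W$, a gradient relation $R\subseteq\tilde V\times\tilde W$, and linear subspaces $V\subseteq\tilde V$, $W\subseteq\tilde W$ such that: (GS1) $V$ is a reflexive Banach space with norm $\|\cdot\|_V$; (GS2) $W$ is a reflexive and strictly convex Banach space with norm $\|\cdot\|_W$; (GS3) if $(u,g)\in R$ with $u\in V$, $g\in W$, then there exists $g'\in W$ with $(-u,g')\in R$; (GS4) if $u,u_i\in V$ and $g,g_i\in W$ with $(u_i,g_i)\in R$ for $i=1,2,\dots$, $\|u-u_i\|_V\to0$ and $\|g-g_i\|_W\to0$, then $(u,g)\in R$. The Sobolev space of $\mathcal U$ is $\mathrm{Sob}(\mathcal U)=\{u\in V:(u,g)\in R\text{ for some }g\in W\}$. Each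 $u\in\mathrm{Sob}(\mathcal U)$ has a unique minimal gradient $g_u\in W$: $(u,g_u)\in R$ and $\|g_u\|_W\le\|g\|_W$ for all $g\in W$ with $(u,g)\in R$. A cone $\mathcal K\subseteq\mathrm{Sob}(\mathcal U)$ (i.e. $u\in\mathcal K,\alpha>0\Rightarrow\alpha u\in\mathcal K$) is a Rellich–Kondrachov cone if for every sequence $\{u_i\}\subseteq\mathcal K$ such that $\{u_i\}$ is bounded in $V$ and $\{g_{u_i}\}$ is bounded in $W$, there is a subsequence converging in $V$ to an element of $\mathcal K$. It is regular if, for $u\in\mathcal K$, $g_u=0$ implies $u=0$. *)

theory Defs
  imports "HOL-Analysis.Analysis"
begin

definition reflexive_space :: "'v::banach itself \<Rightarrow> bool" where
  "reflexive_space _ \<longleftrightarrow>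
     (\<forall>\<Phi> :: ('v \<Rightarrow>\<^sub>L real) \<Rightarrow>\<^sub>L real. \<exists>x::'v. \<forall>f. blinfun_apply \<Phi> f = blinfun_apply f x)"

definition strictly_convex_space :: "'w::real_normed_vector itself \<Rightarrow> bool" where
  "strictly_convex_space _ \<longleftrightarrow>
     (\<forall>x y :: 'w. norm x = 1 \<and> norm y = 1 \<and> x \<noteq> y \<longrightarrow> norm ((1/2) *\<^sub>R (x + y)) < 1)"

definition gradient_relation :: "('a::real_vector \<times> 'b::real_vector) set \<Rightarrow> bool" where
  "gradient_relation R \<longleftrightarrow>
     (\<forall>u g u' g'. (u, g) \<in> R \<and> (u', g') \<in> R \<longrightarrow> (u + u', g + g') \<in> R) \<and>
     (\<forall>u g (\<alpha>::real). (u, g) \<in> R \<and> \<alpha> > 0 \<longrightarrow> (\<alpha> *\<^sub>R u, \<alpha> *\<^sub>R g) \<in> R)"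

text \<open>A gradient space: the Banach spaces V, W are the types 'v, 'w, embedded as
  linear subspaces of the ambient spaces 'a (= V tilde) and 'b (= W tilde) via the
  injective linear maps iV, iW.\<close>
definition gradient_space ::
  "('v::banach \<Rightarrow> 'a::real_vector) \<Rightarrow> ('w::banach \<Rightarrow> 'b::real_vector) \<Rightarrow> ('a \<times> 'b) set \<Rightarrow> bool" where
  "gradient_space iV iW R \<longleftrightarrow>
     linear iV \<and> inj iV \<and> linear iW \<and> inj iW \<and>
     gradient_relation R \<and>
     reflexive_space TYPE('v) \<and>
     reflexive_space TYPE('w) \<and> strictly_convex_space TYPE('w) \<and>
     (\<forall>u g. (iV u, iW g) \<in> R \<longrightarrow> (\<exists>g'. (- iV u, iW g') \<in> R)) \<and>
     (\<forall>u g us gs. (\<forall>i::nat. (iV (us i), iW (gs i)) \<in> R) \<and>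
        (\<lambda>i. norm (u - us i)) \<longlonglongrightarrow> 0 \<and> (\<lambda>i. norm (g - gs i)) \<longlonglongrightarrow> 0
        \<longrightarrow> (iV u, iW g) \<in> R)"

definition Sob :: "('v \<Rightarrow> 'a) \<Rightarrow> ('w \<Rightarrow> 'b) \<Rightarrow> ('a \<times> 'b) set \<Rightarrow> 'v set" where
  "Sob iV iW R = {u. \<exists>g. (iV u, iW g) \<in> R}"

text \<open>The minimal gradient g_u (its existence and uniqueness is a result of the paper).\<close>
definition min_grad :: "('v \<Rightarrow> 'a) \<Rightarrow> ('w::real_normed_vector \<Rightarrow> 'b) \<Rightarrow> ('a \<times> 'b) set \<Rightarrow> 'v \<Rightarrow> 'w" where
  "min_grad iV iW R u =
     (SOME g. (iV u, iW g) \<in> R \<and> (\<forall>g'. (iV u, iW g') \<in> R \<longrightarrow> norm g \<le> norm g'))"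

definition is_cone :: "('v \<Rightarrow> 'a) \<Rightarrow> ('w \<Rightarrow> 'b) \<Rightarrow> ('a \<times> 'b) set \<Rightarrow> 'v::real_vector set \<Rightarrow> bool" where
  "is_cone iV iW R K \<longleftrightarrow> K \<subseteq> Sob iV iW R \<and> (\<forall>u \<in> K. \<forall>\<alpha>::real. \<alpha> > 0 \<longrightarrow> \<alpha> *\<^sub>R u \<in> K)"

definition RK_cone ::
  "('v::real_normed_vector \<Rightarrow> 'a) \<Rightarrow> ('w::real_normed_vector \<Rightarrow> 'b) \<Rightarrow> ('a \<times> 'b) set \<Rightarrow> 'v set \<Rightarrow> bool" where
  "RK_cone iV iW R K \<longleftrightarrow> is_cone iV iW R K \<and>
     (\<forall>us :: nat \<Rightarrow> 'v. (\<forall>i. us i \<in> K) \<and> bounded (range us) \<and>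
        bounded (range (\<lambda>i. min_grad iV iW R (us i)))
        \<longrightarrow> (\<exists>r l. strict_mono r \<and> l \<in> K \<and> (us \<circ> r) \<longlonglongrightarrow> l))"

definition regular_cone ::
  "('v::real_normed_vector \<Rightarrow> 'a) \<Rightarrow> ('w::real_normed_vector \<Rightarrow> 'b) \<Rightarrow> ('a \<times> 'b) set \<Rightarrow> 'v set \<Rightarrow> bool" where
  "regular_cone iV iW R K \<longleftrightarrow> (\<forall>u \<in> K. min_grad iV iW R u = 0 \<longrightarrow> u = 0)"

end

theory Submission
  imports Defs
begin


definition sublinear :: "('a::real_vector \<Rightarrow> real) \<Rightarrow> bool" where
 "sublinear p \<longleftrightarrow> (\<forall>x y. p (x+y) \<le> p x + p y) \<and> (\<forall>c x. c \<ge> 0 \<longrightarrow> p (c *\<^sub>R x) = c * p x)"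

definition hbG :: "('a::real_vector \<Rightarrow> real) \<Rightarrow> 'a \<Rightarrow> ('a\<times>real) set set" where
 "hbG p z = {G. (\<forall>t. (t *\<^sub>R z, t * p z) \<in> G) \<and>
     (\<forall>x y y'. (x,y)\<in>G \<longrightarrow> (x,y')\<in>G \<longrightarrow> y = y') \<and>
     (\<forall>x y x' y'. (x,y)\<in>G \<longrightarrow> (x',y')\<in>G \<longrightarrow> (x+x', y+y')\<in>G) \<and>
     (\<forall>x y c. (x,y)\<in>G \<longrightarrow> (c *\<^sub>R x, c*y)\<in>G) \<and>
     (\<forall>x y. (x,y)\<in>G \<longrightarrow> y \<le> p x)}"


lemma sublinear_add: "sublinear p \<Longrightarrow> p (x+y) \<le> p x + p y"
  unfolding sublinear_def by blast

lemma sublinear_scale: "sublinear p \<Longrightarrow> c \<ge> 0 \<Longrightarrow> p (c *\<^sub>R x) = c * p x"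
  unfolding sublinear_def by blast

lemma sublinear_0: "sublinear p \<Longrightarrow> p 0 = 0"
  using sublinear_scale[of p 0 0] by simp

lemma hbG_D:
  assumes "G \<in> hbG p z"
  shows "\<And>x y y'. (x,y)\<in>G \<Longrightarrow> (x,y')\<in>G \<Longrightarrow> y = y'"
   and "\<And>x y x' y'. (x,y)\<in>G \<Longrightarrow> (x',y')\<in>G \<Longrightarrow> (x+x', y+y')\<in>G"
   and "\<And>x y c. (x,y)\<in>G \<Longrightarrow> (c *\<^sub>R x, c*y)\<in>G"
   and "\<And>x y. (x,y)\<in>G \<Longrightarrow> y \<le> p x"
   and "\<And>t. (t *\<^sub>R z, t * p z) \<in> G"
  using assms unfolding hbG_def by blast+

lemma hbG0: assumes "sublinear p" shows "range (\<lambda>t. (t *\<^sub>R z, t * p z)) \<in> hbG p z"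
proof -
  have p0: "p 0 = 0" using sublinear_0[OF assms] .
  have dom: "t * p z \<le> p (t *\<^sub>R z)" for t
  proof (cases "t \<ge> 0")
    case True then show ?thesis using sublinear_scale[OF assms] by simp
  next
    case False
    have e: "p (t *\<^sub>R z) = (-t) * p (-z)" using sublinear_scale[OF assms, of "-t" "-z"] False by simp
    have "p (z + -z) \<le> p z + p (-z)" by (rule sublinear_add[OF assms])
    then have "0 \<le> p z + p (-z)" using p0 by simp
    then have "t * (p z + p (-z)) \<le> 0" using False by (intro mult_nonpos_nonneg) auto
    then show ?thesis using e by (simp add: distrib_left)
  qed
  have funG: "y = y'" if "(x,y) \<in> range (\<lambda>t. (t *\<^sub>R z, t * p z))" "(x,y') \<in> range (\<lambda>t. (t *\<^sub>R z, t * p z))" for x y y'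
  proof -
    note hh = that
    obtain t t' where tt: "x = t *\<^sub>R z" "y = t * p z" "x = t' *\<^sub>R z" "y' = t' * p z" using hh by blast
    show ?thesis
    proof (cases "z = 0")
      case True then show ?thesis using tt p0 by simp
    next
      case False
      have "(t - t') *\<^sub>R z = 0" using tt(1,3) by (auto simp: scaleR_diff_left)
      then have "t = t'" using False by auto
      then show ?thesis using tt by simp
    qed
  qed
  show ?thesis unfolding hbG_def
  proof (intro CollectI conjI allI impI)
    show "(t *\<^sub>R z, t * p z) \<in> range (\<lambda>t. (t *\<^sub>R z, t * p z))" for t by (rule rangeI)
    show "y = y'" if "(x, y) \<in> range (\<lambda>t. (t *\<^sub>R z, t * p z))" "(x, y') \<in> range (\<lambda>t. (t *\<^sub>R z, t * p z))" for x y y'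
      by (rule funG[OF that])
    show "(x + x', y + y') \<in> range (\<lambda>t. (t *\<^sub>R z, t * p z))"
      if "(x, y) \<in> range (\<lambda>t. (t *\<^sub>R z, t * p z))" "(x', y') \<in> range (\<lambda>t. (t *\<^sub>R z, t * p z))" for x y x' y'
    proof -
      note hh = that
      obtain t t' where "x = t *\<^sub>R z" "y = t * p z" "x' = t' *\<^sub>R z" "y' = t' * p z" using hh by blast
      then have "(x + x', y + y') = ((t + t') *\<^sub>R z, (t + t') * p z)" by (simp add: algebra_simps)
      then show ?thesis by (simp only:) (rule rangeI)
    qed
    show "(c *\<^sub>R x, c * y) \<in> range (\<lambda>t. (t *\<^sub>R z, t * p z))"
      if "(x, y) \<in> range (\<lambda>t. (t *\<^sub>R z, t * p z))" for x y c
    proof -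
      note hh = that
      obtain t where "x = t *\<^sub>R z" "y = t * p z" using hh by blast
      then have "(c *\<^sub>R x, c * y) = ((c * t) *\<^sub>R z, (c * t) * p z)" by (simp add: algebra_simps)
      then show ?thesis by (simp only:) (rule rangeI)
    qed
    show "y \<le> p x" if "(x, y) \<in> range (\<lambda>t. (t *\<^sub>R z, t * p z))" for x y
    proof -
      note hh = that
      obtain t where "x = t *\<^sub>R z" "y = t * p z" using hh by blast
      then show ?thesis using dom[of t] by simp
    qed
  qed
qed

lemma hb_extend:
  assumes p: "sublinear p" and M: "M \<in> hbG p z" and w: "\<nexists>y. (w,y) \<in> M"
  shows "\<exists>M' \<in> hbG p z. M \<subseteq> M' \<and> M' \<noteq> M"
proof -
  have Mfun: "\<And>x y y'. (x,y)\<in>M \<Longrightarrow> (x,y')\<in>M \<Longrightarrow> y = y'"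
   and Madd: "\<And>x y x' y'. (x,y)\<in>M \<Longrightarrow> (x',y')\<in>M \<Longrightarrow> (x+x', y+y')\<in>M"
   and Msc: "\<And>x y c. (x,y)\<in>M \<Longrightarrow> (c *\<^sub>R x, c*y)\<in>M"
   and Mdom: "\<And>x y. (x,y)\<in>M \<Longrightarrow> y \<le> p x"
   and M0: "\<And>t. (t *\<^sub>R z, t * p z) \<in> M"
    using hbG_D[OF M] by blast+
  have zero: "(0,0) \<in> M" using M0[of 0] by simp
  define S where "S = {y' - p (x' - w) | x' y'. (x',y') \<in> M}"
  define c where "c = Sup S"
  have Sne: "S \<noteq> {}" using zero unfolding S_def by blast
  have bnd: "s \<le> p (x + w) - y" if sS: "s \<in> S" and xyM: "(x,y) \<in> M" for s x y
  proof -
    obtain x' y' where s: "s = y' - p (x' - w)" "(x',y') \<in> M" using sS unfolding S_def by blast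
    have "y + y' \<le> p (x + x')" using Madd[OF xyM s(2)] Mdom by blast
    also have "\<dots> = p ((x + w) + (x' - w))" by (simp add: algebra_simps)
    also have "\<dots> \<le> p (x + w) + p (x' - w)" by (rule sublinear_add[OF p])
    finally show ?thesis using s by simp
  qed
  have Sbdd: "bdd_above S" using bnd zero by (meson bdd_above.I)
  have c_up: "y' - p (x' - w) \<le> c" if "(x',y') \<in> M" for x' y'
    unfolding c_def using that Sbdd by (intro cSup_upper) (auto simp: S_def)
  have c_lo: "c \<le> p (x + w) - y" if "(x,y) \<in> M" for x y
    unfolding c_def using Sne bnd[OF _ that] by (intro cSup_least) auto
  have key: "y + t * c \<le> p (x + t *\<^sub>R w)" if xy: "(x,y) \<in> M" for x y t
  proof -
    consider "t > 0" | "t = 0" | "t < 0" by linarith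
    then show ?thesis
    proof cases
      case 1
      have "c \<le> p ((1/t) *\<^sub>R x + w) - (1/t) * y" using c_lo[OF Msc[OF xy, of "1/t"]] .
      then have "t * c \<le> t * (p ((1/t) *\<^sub>R x + w) - (1/t) * y)" using 1
        by (intro mult_left_mono) auto
      then have "t * c \<le> t * p ((1/t) *\<^sub>R x + w) - y" using 1
        by (simp add: right_diff_distrib)
      also have "t * p ((1/t) *\<^sub>R x + w) = p (t *\<^sub>R ((1/t) *\<^sub>R x + w))"
        using sublinear_scale[OF p, of t] 1 by simp
      also have "t *\<^sub>R ((1/t) *\<^sub>R x + w) = x + t *\<^sub>R w" using 1 by (simp add: scaleR_add_right)
      finally show ?thesis by simp
    next
      case 2 then show ?thesis using Mdom[OF xy] by simp
    next
      case 3
      define s where "s = -t"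
      have s: "s > 0" using 3 s_def by simp
      have "(1/s) * y - p ((1/s) *\<^sub>R x - w) \<le> c" using c_up[OF Msc[OF xy, of "1/s"]] .
      then have "s * ((1/s) * y - p ((1/s) *\<^sub>R x - w)) \<le> s * c" using s by (simp add: mult_left_mono)
      then have "y - s * p ((1/s) *\<^sub>R x - w) \<le> s * c" using s by (simp add: right_diff_distrib)
      also have "s * p ((1/s) *\<^sub>R x - w) = p (s *\<^sub>R ((1/s) *\<^sub>R x - w))"
        using sublinear_scale[OF p, of s] s by simp
      also have "s *\<^sub>R ((1/s) *\<^sub>R x - w) = x + t *\<^sub>R w" using s by (simp add: scaleR_diff_right s_def)
      finally show ?thesis using s_def by simp
    qed
  qed
  define M' where "M' = {(x + t *\<^sub>R w, y + t*c) | x y t. (x,y) \<in> M}"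
  have sub: "M \<subseteq> M'" unfolding M'_def by force
  have neq: "M' \<noteq> M"
  proof
    assume "M' = M"
    moreover have "(w, c) \<in> M'" unfolding M'_def using zero by force
    ultimately show False using w by blast
  qed
  have diff: "(x - x', y - y') \<in> M" if "(x,y) \<in> M" "(x',y') \<in> M" for x y x' y'
    using Madd[OF that(1) Msc[OF that(2), of "-1"]] by simp
  have M'fun: "y1 = y2" if "(x,y1) \<in> M'" "(x,y2) \<in> M'" for x y1 y2
  proof -
    note hh = that
    obtain a1 b1 t1 where 1: "x = a1 + t1 *\<^sub>R w" "y1 = b1 + t1 * c" "(a1,b1) \<in> M" using hh(1) unfolding M'_def by blast
    obtain a2 b2 t2 where 2: "x = a2 + t2 *\<^sub>R w" "y2 = b2 + t2 * c" "(a2,b2) \<in> M" using hh(2) unfolding M'_def by blast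
    have tt: "t1 = t2"
    proof (rule ccontr)
      assume ne: "t1 \<noteq> t2"
      have "(a1 - a2, b1 - b2) \<in> M" using diff 1 2 by blast
      from Msc[OF this, of "1/(t2 - t1)"]
      have "((1/(t2 - t1)) *\<^sub>R (a1 - a2), (1/(t2 - t1)) * (b1 - b2)) \<in> M" .
      moreover have "a1 - a2 = (t2 - t1) *\<^sub>R w" using 1 2 by (simp add: algebra_simps)
      ultimately have "(w, (1/(t2 - t1)) * (b1 - b2)) \<in> M" using ne by simp
      then show False using w by blast
    qed
    then have "a1 = a2" using 1 2 by simp
    then have "b1 = b2" using Mfun 1 2 by blast
    then show ?thesis using 1 2 tt by simp
  qed
  have "M' \<in> hbG p z"
    unfolding hbG_def
  proof (intro CollectI conjI allI impI)
    show "(t *\<^sub>R z, t * p z) \<in> M'" for t using sub M0 by blast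
    show "y = y'" if "(x, y) \<in> M'" "(x, y') \<in> M'" for x y y' using M'fun that by blast
    show "(x + x', y + y') \<in> M'" if "(x, y) \<in> M'" "(x', y') \<in> M'" for x y x' y'
    proof -
      note hh = that
      obtain a1 b1 t1 where 1: "x = a1 + t1 *\<^sub>R w" "y = b1 + t1 * c" "(a1,b1) \<in> M" using hh(1) unfolding M'_def by blast
      obtain a2 b2 t2 where 2: "x' = a2 + t2 *\<^sub>R w" "y' = b2 + t2 * c" "(a2,b2) \<in> M" using hh(2) unfolding M'_def by blast
      have "(a1 + a2, b1 + b2) \<in> M" using Madd 1 2 by blast
      moreover have "x + x' = (a1 + a2) + (t1 + t2) *\<^sub>R w" "y + y' = (b1 + b2) + (t1 + t2) * c"
        using 1 2 by (simp_all add: algebra_simps)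
      ultimately show ?thesis unfolding M'_def by blast
    qed
    show "(a *\<^sub>R x, a * y) \<in> M'" if "(x, y) \<in> M'" for x y a
    proof -
      note hh = that
      obtain a1 b1 t1 where 1: "x = a1 + t1 *\<^sub>R w" "y = b1 + t1 * c" "(a1,b1) \<in> M" using hh(1) unfolding M'_def by blast
      have "(a *\<^sub>R a1, a * b1) \<in> M" using Msc 1 by blast
      moreover have "a *\<^sub>R x = a *\<^sub>R a1 + (a * t1) *\<^sub>R w" "a * y = a * b1 + (a * t1) * c"
        using 1 by (simp_all add: algebra_simps)
      ultimately show ?thesis unfolding M'_def by blast
    qed
    show "y \<le> p x" if "(x, y) \<in> M'" for x y
      using that key unfolding M'_def by blast
  qed
  then show ?thesis using sub neq by blast
qed

theorem hahn_banach:
  fixes p :: "'a::real_vector \<Rightarrow> real"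
  assumes p: "sublinear p"
  shows "\<exists>f. (\<forall>x y. f (x + y) = f x + f y) \<and> (\<forall>a x. f (a *\<^sub>R x) = a * f x) \<and>
             (\<forall>x. f x \<le> p x) \<and> f z = p z"
proof -
  have ne: "hbG p z \<noteq> {}" using hbG0[OF p] by blast
  have ch: "\<Union>C \<in> hbG p z" if Cne: "C \<noteq> {}" and Cch: "subset.chain (hbG p z) C" for C
  proof -
    have CA: "\<And>G. G \<in> C \<Longrightarrow> G \<in> hbG p z" and lin: "\<And>X Y. X \<in> C \<Longrightarrow> Y \<in> C \<Longrightarrow> X \<subseteq> Y \<or> Y \<subseteq> X"
      using Cch unfolding subset.chain_def by auto
    have two: "\<exists>G\<in>C. a \<in> G \<and> b \<in> G" if "a \<in> \<Union>C" "b \<in> \<Union>C" for a b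
    proof -
      note hh = that
      obtain G1 G2 where "G1 \<in> C" "G2 \<in> C" "a \<in> G1" "b \<in> G2" using hh by auto
      then show ?thesis using lin[of G1 G2] by auto
    qed
    obtain G0 where G0: "G0 \<in> C" using Cne by auto
    show ?thesis unfolding hbG_def
    proof (intro CollectI conjI allI impI)
      show "(t *\<^sub>R z, t * p z) \<in> \<Union>C" for t using G0 CA[OF G0] hbG_D(5) by blast
      show "y = y'" if "(x, y) \<in> \<Union>C" "(x, y') \<in> \<Union>C" for x y y'
        using two[OF that] CA hbG_D(1) by metis
      show "(x + x', y + y') \<in> \<Union>C" if "(x, y) \<in> \<Union>C" "(x', y') \<in> \<Union>C" for x y x' y'
        using two[OF that] CA hbG_D(2) by (metis UnionI)
      show "(a *\<^sub>R x, a * y) \<in> \<Union>C" if "(x, y) \<in> \<Union>C" for x y a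
        using that CA hbG_D(3) by (metis UnionE UnionI)
      show "y \<le> p x" if "(x, y) \<in> \<Union>C" for x y
        using that CA hbG_D(4) by (metis UnionE)
    qed
  qed
  obtain M where M: "M \<in> hbG p z" and max: "\<And>X. X \<in> hbG p z \<Longrightarrow> M \<subseteq> X \<Longrightarrow> X = M"
    using subset_Zorn_nonempty[OF ne ch] by blast
  have Mfun: "\<And>x y y'. (x,y)\<in>M \<Longrightarrow> (x,y')\<in>M \<Longrightarrow> y = y'"
   and Madd: "\<And>x y x' y'. (x,y)\<in>M \<Longrightarrow> (x',y')\<in>M \<Longrightarrow> (x+x', y+y')\<in>M"
   and Msc: "\<And>x y c. (x,y)\<in>M \<Longrightarrow> (c *\<^sub>R x, c*y)\<in>M"
   and Mdom: "\<And>x y. (x,y)\<in>M \<Longrightarrow> y \<le> p x"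
   and M0: "\<And>t. (t *\<^sub>R z, t * p z) \<in> M"
    using hbG_D[OF M] by blast+
  have tot: "\<exists>y. (x,y) \<in> M" for x
    using hb_extend[OF p M, of x] max by blast
  define f where "f x = (THE y. (x,y) \<in> M)" for x
  have fM: "(x, f x) \<in> M" for x
    unfolding f_def using tot[of x] Mfun by (metis theI)
  have fi: "f x = y" if "(x,y) \<in> M" for x y using fM that Mfun by blast
  show ?thesis
  proof (intro exI conjI allI)
    show "f (x + y) = f x + f y" for x y using fi[OF Madd[OF fM fM]] .
    show "f (a *\<^sub>R x) = a * f x" for a x using fi[OF Msc[OF fM]] .
    show "f x \<le> p x" for x using Mdom[OF fM] .
    show "f z = p z" using fi[OF M0[of 1]] by simp
  qed
qed




definition gauge :: "'a::real_normed_vector set \<Rightarrow> 'a \<Rightarrow> real" where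
  "gauge D y = Inf {t. 0 < t \<and> (1/t) *\<^sub>R y \<in> D}"

locale gauge_ctx =
  fixes D :: "'a::real_normed_vector set" and \<epsilon> :: real
  assumes cvx: "convex D" and epos: "\<epsilon> > 0" and ball: "\<And>y. norm y < \<epsilon> \<Longrightarrow> y \<in> D"
begin

definition T where "T y = {t. 0 < t \<and> (1/t) *\<^sub>R y \<in> D}"

lemma zeroD: "0 \<in> D" using ball epos by simp

lemma star: "y \<in> D \<Longrightarrow> 0 \<le> a \<Longrightarrow> a \<le> 1 \<Longrightarrow> a *\<^sub>R y \<in> D"
  using convexD[OF cvx, of y 0 a "1 - a"] zeroD by simp

lemma T_in: "0 < t \<Longrightarrow> norm y < \<epsilon> * t \<Longrightarrow> t \<in> T y"
proof -
  assume t: "0 < t" and n: "norm y < \<epsilon> * t"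
  have "norm ((1/t) *\<^sub>R y) = norm y / t" using t by simp
  also have "\<dots> < \<epsilon>" using n t by (simp add: divide_less_eq mult.commute)
  finally show ?thesis using ball t unfolding T_def by simp
qed

lemma T_ne: "T y \<noteq> {}"
proof -
  have "norm y / \<epsilon> + 1 \<in> T y"
  proof (rule T_in)
    show "0 < norm y / \<epsilon> + 1" using epos by (simp add: add_nonneg_pos)
    have "\<epsilon> * (norm y / \<epsilon> + 1) = norm y + \<epsilon>" using epos by (simp add: distrib_left)
    then show "norm y < \<epsilon> * (norm y / \<epsilon> + 1)" using epos by simp
  qed
  then show ?thesis by blast
qed

lemma T_bdd: "bdd_below (T y)"
  unfolding T_def by (rule bdd_belowI[of _ 0]) auto

lemma T_up: "t \<in> T y \<Longrightarrow> t \<le> s \<Longrightarrow> s \<in> T y"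
proof -
  assume t: "t \<in> T y" and ts: "t \<le> s"
  have tp: "0 < t" and yD: "(1/t) *\<^sub>R y \<in> D" using t unfolding T_def by auto
  have sp: "0 < s" using tp ts by simp
  have "(t/s) *\<^sub>R ((1/t) *\<^sub>R y) \<in> D" by (rule star[OF yD]) (use tp sp ts in auto)
  moreover have e: "(1/s) *\<^sub>R y = (t/s) *\<^sub>R ((1/t) *\<^sub>R y)" using tp by simp
  ultimately have "(1/s) *\<^sub>R y \<in> D" by (simp only: e)
  then show ?thesis using sp unfolding T_def by simp
qed

lemma gauge_T: "gauge D y = Inf (T y)" unfolding gauge_def T_def by simp

lemma g_lower: assumes "t \<in> T y" shows "gauge D y \<le> t"
  unfolding gauge_T by (rule cInf_lower[OF assms T_bdd])

lemma g_nonneg: "0 \<le> gauge D y"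
  unfolding gauge_T using T_ne by (rule cInf_greatest) (auto simp: T_def)

lemma g_T: "gauge D y < s \<Longrightarrow> s \<in> T y"
proof -
  assume "gauge D y < s"
  then obtain t where "t \<in> T y" "t < s" using cInf_less_iff[OF T_ne T_bdd] unfolding gauge_T by blast
  then show ?thesis using T_up by simp
qed

lemma g_bound: "gauge D y \<le> norm y / \<epsilon>"
proof (rule field_le_epsilon)
  fix e :: real assume e: "0 < e"
  have "norm y / \<epsilon> + e \<in> T y"
  proof (rule T_in)
    show "0 < norm y / \<epsilon> + e" using epos e by (simp add: add_nonneg_pos)
    have "\<epsilon> * (norm y / \<epsilon> + e) = norm y + \<epsilon> * e" using epos by (simp add: distrib_left)
    then show "norm y < \<epsilon> * (norm y / \<epsilon> + e)" using epos e by simp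
  qed
  then show "gauge D y \<le> norm y / \<epsilon> + e" by (rule g_lower)
qed

lemma g_sub: "gauge D (y1 + y2) \<le> gauge D y1 + gauge D y2"
proof (rule field_le_epsilon)
  fix e :: real assume e: "0 < e"
  define s1 where "s1 = gauge D y1 + e/2"
  define s2 where "s2 = gauge D y2 + e/2"
  have s1: "s1 \<in> T y1" using g_T e unfolding s1_def by simp
  have s2: "s2 \<in> T y2" using g_T e unfolding s2_def by simp
  have p1: "0 < s1" and d1: "(1/s1) *\<^sub>R y1 \<in> D" using s1 unfolding T_def by auto
  have p2: "0 < s2" and d2: "(1/s2) *\<^sub>R y2 \<in> D" using s2 unfolding T_def by auto
  have "(s1/(s1+s2)) *\<^sub>R ((1/s1) *\<^sub>R y1) + (s2/(s1+s2)) *\<^sub>R ((1/s2) *\<^sub>R y2) \<in> D"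
    using p1 p2 by (intro convexD[OF cvx d1 d2]) (auto simp: add_divide_distrib[symmetric])
  moreover have "(s1/(s1+s2)) *\<^sub>R ((1/s1) *\<^sub>R y1) + (s2/(s1+s2)) *\<^sub>R ((1/s2) *\<^sub>R y2) = (1/(s1+s2)) *\<^sub>R (y1 + y2)"
    using p1 p2 by (simp add: scaleR_add_right)
  ultimately have "s1 + s2 \<in> T (y1 + y2)" using p1 p2 unfolding T_def by simp
  then have "gauge D (y1 + y2) \<le> s1 + s2" by (rule g_lower)
  then show "gauge D (y1 + y2) \<le> gauge D y1 + gauge D y2 + e" unfolding s1_def s2_def by simp
qed

lemma g_hom_le: "0 < c \<Longrightarrow> gauge D (c *\<^sub>R y) \<le> c * gauge D y"
proof -
  assume c: "0 < c"
  show ?thesis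
  proof (rule field_le_epsilon)
    fix e :: real assume e: "0 < e"
    define s where "s = gauge D y + e / c"
    have "s \<in> T y" using g_T e c unfolding s_def by simp
    then have sp: "0 < s" and d: "(1/s) *\<^sub>R y \<in> D" unfolding T_def by auto
    have "(1 / (c * s)) *\<^sub>R (c *\<^sub>R y) = (1/s) *\<^sub>R y" using c by simp
    then have "c * s \<in> T (c *\<^sub>R y)" using d sp c unfolding T_def by simp
    then have "gauge D (c *\<^sub>R y) \<le> c * s" by (rule g_lower)
    also have "c * s = c * gauge D y + e" unfolding s_def using c by (simp add: distrib_left)
    finally show "gauge D (c *\<^sub>R y) \<le> c * gauge D y + e" .
  qed
qed

lemma g_hom: "0 \<le> c \<Longrightarrow> gauge D (c *\<^sub>R y) = c * gauge D y"
proof -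
  assume c: "0 \<le> c"
  show ?thesis
  proof (cases "c = 0")
    case True
    have "gauge D 0 \<le> 0" using g_bound[of 0] by simp
    then show ?thesis using True g_nonneg[of 0] by simp
  next
    case False
    then have cp: "0 < c" using c by simp
    have 1: "gauge D (c *\<^sub>R y) \<le> c * gauge D y" by (rule g_hom_le[OF cp])
    have "gauge D ((1/c) *\<^sub>R (c *\<^sub>R y)) \<le> (1/c) * gauge D (c *\<^sub>R y)" using cp by (intro g_hom_le) simp
    then have "gauge D y \<le> (1/c) * gauge D (c *\<^sub>R y)" using cp by simp
    then have "c * gauge D y \<le> gauge D (c *\<^sub>R y)" using cp by (simp add: field_simps)
    then show ?thesis using 1 by simp
  qed
qed

lemma g_sublinear: "sublinear (gauge D)"
  unfolding sublinear_def using g_sub g_hom by blast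

lemma g_in: "y \<in> D \<Longrightarrow> gauge D y \<le> 1"
  by (rule g_lower) (simp add: T_def)

lemma g_out: "y \<notin> D \<Longrightarrow> 1 \<le> gauge D y"
proof (rule ccontr)
  assume "y \<notin> D" "\<not> 1 \<le> gauge D y"
  then have "1 \<in> T y" using g_T by simp
  then show False using \<open>y \<notin> D\<close> unfolding T_def by simp
qed

end

lemma separation:
  fixes C :: "'a::real_normed_vector set"
  assumes cl: "closed C" and cv: "convex C" and ne: "C \<noteq> {}" and x: "x \<notin> C"
  shows "\<exists>f::'a \<Rightarrow>\<^sub>L real. \<exists>\<delta>>0. \<forall>c\<in>C. f c + \<delta> \<le> f x"
proof -
  obtain c0 where c0: "c0 \<in> C" using ne by blast
  define \<epsilon> where "\<epsilon> = infdist x C"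
  have epos: "\<epsilon> > 0" unfolding \<epsilon>_def by (rule infdist_pos_not_in_closed[OF cl ne x])
  have far: "\<epsilon> \<le> norm (x - c)" if "c \<in> C" for c
    using infdist_le[OF that, of x] unfolding \<epsilon>_def by (simp add: dist_norm)
  define D where "D = {y. \<exists>c\<in>C. norm (y + c0 - c) < \<epsilon>}"
  have Dcvx: "convex D"
  proof (rule convexI)
    fix y1 y2 and u v :: real
    assume y1: "y1 \<in> D" and y2: "y2 \<in> D" and uv1: "0 \<le> u" and uv2: "0 \<le> v" and uv3: "u + v = 1"
    have uv: "0 \<le> u \<and> 0 \<le> v \<and> u + v = 1" using uv1 uv2 uv3 by blast
    obtain c1 where c1: "c1 \<in> C" "norm (y1 + c0 - c1) < \<epsilon>" using y1 unfolding D_def by blast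
    obtain c2 where c2: "c2 \<in> C" "norm (y2 + c0 - c2) < \<epsilon>" using y2 unfolding D_def by blast
    have cc: "u *\<^sub>R c1 + v *\<^sub>R c2 \<in> C" using convexD[OF cv c1(1) c2(1)] uv by blast
    have eq: "u *\<^sub>R y1 + v *\<^sub>R y2 + c0 - (u *\<^sub>R c1 + v *\<^sub>R c2)
        = u *\<^sub>R (y1 + c0 - c1) + v *\<^sub>R (y2 + c0 - c2)"
    proof -
      have "c0 = u *\<^sub>R c0 + v *\<^sub>R c0" using uv by (simp add: scaleR_add_left[symmetric])
      then show ?thesis by (simp add: algebra_simps)
    qed
    have "norm (u *\<^sub>R (y1 + c0 - c1) + v *\<^sub>R (y2 + c0 - c2))
        \<le> u * norm (y1 + c0 - c1) + v * norm (y2 + c0 - c2)"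
      using uv by (metis (no_types, lifting) abs_of_nonneg norm_scaleR norm_triangle_ineq)
    also have "\<dots> < \<epsilon>" using uv c1 c2 by (intro convex_bound_lt) auto
    finally have "norm (u *\<^sub>R y1 + v *\<^sub>R y2 + c0 - (u *\<^sub>R c1 + v *\<^sub>R c2)) < \<epsilon>" unfolding eq .
    then show "u *\<^sub>R y1 + v *\<^sub>R y2 \<in> D" unfolding D_def using cc by blast
  qed
  have Dball: "y \<in> D" if "norm y < \<epsilon>" for y
    unfolding D_def using c0 that by (intro CollectI bexI[of _ c0]) auto
  interpret G: gauge_ctx D \<epsilon> using Dcvx epos Dball by unfold_locales auto
  define z where "z = x - c0"
  have zD: "z \<notin> D"
  proof
    assume "z \<in> D"
    then obtain c where "c \<in> C" "norm (z + c0 - c) < \<epsilon>" unfolding D_def by blast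
    then show False using far[of c] unfolding z_def by simp
  qed
  have z0: "z \<noteq> 0" using zD G.zeroD by auto
  obtain f where fadd: "\<And>a b. f (a + b) = f a + f b" and fsc: "\<And>a v. f (a *\<^sub>R v) = a * f v"
    and fle: "\<And>v. f v \<le> gauge D v" and fz: "f z = gauge D z"
    using hahn_banach[OF G.g_sublinear, of z] by blast
  have fz1: "1 \<le> f z" using fz G.g_out[OF zD] by simp
  have fb: "\<bar>f v\<bar> \<le> norm v / \<epsilon>" for v
  proof -
    have a: "f v \<le> norm v / \<epsilon>" using fle[of v] G.g_bound[of v] by simp
    have "f (-v) \<le> norm v / \<epsilon>" using fle[of "-v"] G.g_bound[of "-v"] by simp
    moreover have "f (-v) = - f v" using fsc[of "-1" v] by simp
    ultimately show ?thesis using a by simp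
  qed
  have bl: "bounded_linear f"
    by (rule bounded_linear_intro[where K="1/\<epsilon>"]) (use fadd fsc fb in auto)
  define k where "k = \<epsilon> / (2 * norm z)"
  have kpos: "k > 0" unfolding k_def using epos z0 by simp
  have marg: "f c + k \<le> f x" if c: "c \<in> C" for c
  proof -
    define b where "b = k *\<^sub>R z"
    have nb: "norm b < \<epsilon>" unfolding b_def k_def using epos z0 by simp
    have "(c - c0) + b \<in> D" unfolding D_def using c nb by (intro CollectI bexI[of _ c]) (auto simp: algebra_simps)
    then have "f ((c - c0) + b) \<le> 1" using fle G.g_in order_trans by blast
    then have "f c - f c0 + k * f z \<le> 1" using fadd[of "c - c0" b] fadd[of "c - c0" c0] fsc[of k z]
      unfolding b_def by simp
    moreover have "k \<le> k * f z" using fz1 kpos by simp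
    moreover have "f x = f z + f c0" using fadd[of z c0] unfolding z_def by simp
    ultimately show ?thesis using fz1 by linarith
  qed
  show ?thesis
    using marg kpos bounded_linear_Blinfun_apply[OF bl] by (intro exI[of _ "Blinfun f"] exI[of _ k]) auto
qed




definition LS :: "(nat \<Rightarrow> real) \<Rightarrow> real" where
  "LS a = real_of_ereal (limsup (\<lambda>n. ereal (a n)))"

lemma ls_eq:
  assumes "\<And>n. \<bar>a n\<bar> \<le> K"
  shows "limsup (\<lambda>n. ereal (a n)) = ereal (LS a)"
proof -
  have k1: "a n \<le> K" for n using assms[of n] by (rule abs_le_D1)
  have k2: "- K \<le> a n" for n using assms[of n] by simp
  have up: "limsup (\<lambda>n. ereal (a n)) \<le> ereal K"
    by (rule Limsup_bounded, rule always_eventually) (simp add: k1)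
  have "ereal (-K) \<le> liminf (\<lambda>n. ereal (a n))"
    by (rule Liminf_bounded, rule always_eventually) (simp add: k2)
  also have "\<dots> \<le> limsup (\<lambda>n. ereal (a n))" by (rule Liminf_le_Limsup) simp
  finally have lo: "ereal (-K) \<le> limsup (\<lambda>n. ereal (a n))" .
  show ?thesis unfolding LS_def using up lo by (cases "limsup (\<lambda>n. ereal (a n))") auto
qed

lemma ls_add:
  assumes "\<And>n. \<bar>a n\<bar> \<le> K" "\<And>n. \<bar>b n\<bar> \<le> L"
  shows "LS (\<lambda>n. a n + b n) \<le> LS a + LS b"
proof -
  have ab: "\<bar>a n + b n\<bar> \<le> K + L" for n using assms(1)[of n] assms(2)[of n] by linarith
  have "limsup (\<lambda>n. ereal (a n) + ereal (b n)) \<le> limsup (\<lambda>n. ereal (a n)) + limsup (\<lambda>n. ereal (b n))"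
    by (rule ereal_limsup_add_mono)
  then have "ereal (LS (\<lambda>n. a n + b n)) \<le> ereal (LS a) + ereal (LS b)"
    using ls_eq[OF ab] ls_eq[OF assms(1)] ls_eq[OF assms(2)] by simp
  then show ?thesis by simp
qed

lemma ls_scale:
  assumes "\<And>n. \<bar>a n\<bar> \<le> K" "0 \<le> c"
  shows "LS (\<lambda>n. c * a n) = c * LS a"
proof -
  have ca: "\<bar>c * a n\<bar> \<le> c * K" for n using assms mult_left_mono[OF assms(1)[of n] assms(2)] by (simp add: abs_mult)
  have "limsup (\<lambda>n. ereal c * ereal (a n)) = ereal c * limsup (\<lambda>n. ereal (a n))"
    by (rule limsup_ereal_mult_left) (rule assms(2))
  then have "ereal (LS (\<lambda>n. c * a n)) = ereal c * ereal (LS a)"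
    using ls_eq[OF ca] ls_eq[OF assms(1)] by simp
  then show ?thesis by simp
qed

lemma ls_le:
  assumes "\<And>n. \<bar>a n\<bar> \<le> K" "\<And>n. n \<ge> N \<Longrightarrow> a n \<le> s"
  shows "LS a \<le> s"
proof -
  have "limsup (\<lambda>n. ereal (a n)) \<le> ereal s"
    by (rule Limsup_bounded) (use assms(2) in \<open>auto intro: eventually_sequentiallyI\<close>)
  then show ?thesis using ls_eq[OF assms(1)] by simp
qed

lemma nested_reflexive:
  fixes C :: "nat \<Rightarrow> 'w::banach set"
  assumes refl: "reflexive_space TYPE('w)"
    and cl: "\<And>n. closed (C n)" and cv: "\<And>n. convex (C n)" and ne: "\<And>n. C n \<noteq> {}"
    and dec: "\<And>n. C (Suc n) \<subseteq> C n" and bd: "bounded (C 0)"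
  shows "\<exists>x. \<forall>n. x \<in> C n"
proof -
  have sub0: "C n \<subseteq> C 0" for n
  proof (induction n)
    case (Suc n) then show ?case using dec[of n] by blast
  qed simp
  have decle: "C m \<subseteq> C n" if "n \<le> m" for n m
    using that
  proof (induction m)
    case 0 then show ?case by simp
  next
    case (Suc m) then show ?case using dec[of m] by (cases "n = Suc m") auto
  qed
  obtain B where B: "\<And>y. y \<in> C 0 \<Longrightarrow> norm y \<le> B" using bd unfolding bounded_iff by blast
  define xs where "xs n = (SOME y. y \<in> C n)" for n
  have xsC: "xs n \<in> C n" for n unfolding xs_def using ne[of n] by (simp add: some_in_eq)
  have xsB: "norm (xs n) \<le> B" for n using B sub0 xsC by blast
  have ab0: "\<bar>blinfun_apply f (xs n)\<bar> \<le> norm f * B" for f :: "'w \<Rightarrow>\<^sub>L real" and n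
  proof -
    have "\<bar>blinfun_apply f (xs n)\<bar> \<le> norm f * norm (xs n)" using norm_blinfun[of f "xs n"] by simp
    also have "\<dots> \<le> norm f * B" using xsB[of n] by (simp add: mult_left_mono)
    finally show ?thesis .
  qed
  have ab: "\<And>n. \<bar>blinfun_apply f (xs n)\<bar> \<le> norm f * B" for f :: "'w \<Rightarrow>\<^sub>L real"
    using ab0 by blast
  define p where "p f = LS (\<lambda>n. blinfun_apply f (xs n))" for f :: "'w \<Rightarrow>\<^sub>L real"
  have psub: "sublinear p" unfolding sublinear_def
  proof (intro conjI allI impI)
    show "p (f + g) \<le> p f + p g" for f g
      unfolding p_def using ls_add[OF ab[of f] ab[of g]] by (simp add: blinfun.add_left)
    show "p (c *\<^sub>R f) = c * p f" if "0 \<le> c" for c f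
      unfolding p_def using ls_scale[OF ab[of f] that] by (simp add: blinfun.scaleR_left)
  qed
  obtain \<Phi>0 where Padd: "\<And>a b. \<Phi>0 (a + b) = \<Phi>0 a + \<Phi>0 b" and Psc: "\<And>a v. \<Phi>0 (a *\<^sub>R v) = a * \<Phi>0 v"
    and Ple: "\<And>v. \<Phi>0 v \<le> p v"
    using hahn_banach[OF psub, of 0] by blast
  have pB: "p f \<le> norm f * B" for f unfolding p_def
    by (rule ls_le[OF ab[of f], of 0]) (use ab[of f] abs_le_D1 in auto)
  have Pb: "\<bar>\<Phi>0 f\<bar> \<le> norm f * B" for f
  proof -
    have "\<Phi>0 f \<le> norm f * B" using Ple[of f] pB[of f] by simp
    moreover have "\<Phi>0 (-f) \<le> norm f * B" using Ple[of "-f"] pB[of "-f"] by simp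
    moreover have "\<Phi>0 (-f) = - \<Phi>0 f" using Psc[of "-1" f] by simp
    ultimately show ?thesis by simp
  qed
  have bl: "bounded_linear \<Phi>0"
    by (rule bounded_linear_intro[where K=B]) (use Padd Psc Pb in auto)
  obtain x where x: "\<And>f. blinfun_apply (Blinfun \<Phi>0) f = blinfun_apply f x"
    using refl unfolding reflexive_space_def by blast
  have xf: "\<Phi>0 f = blinfun_apply f x" for f using x[of f] bounded_linear_Blinfun_apply[OF bl] by simp
  have "x \<in> C N" for N
  proof (rule ccontr)
    assume nx: "x \<notin> C N"
    obtain f :: "'w \<Rightarrow>\<^sub>L real" and \<delta> where dp: "\<delta> > 0" and sep: "\<And>c. c \<in> C N \<Longrightarrow> blinfun_apply f c + \<delta> \<le> blinfun_apply f x"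
      using separation[OF cl cv ne nx] by blast
    have "p f \<le> blinfun_apply f x - \<delta>" unfolding p_def
    proof (rule ls_le[OF ab[of f], of N])
      fix n assume "N \<le> n"
      then have "xs n \<in> C N" using decle xsC by blast
      then show "blinfun_apply f (xs n) \<le> blinfun_apply f x - \<delta>" using sep by fastforce
    qed
    then show False using Ple[of f] xf[of f] dp by simp
  qed
  then show ?thesis by blast
qed




lemma conv_norm_le:
  fixes a b l :: "'a::real_normed_vector"
  assumes "norm (a - l) \<le> e" "norm (b - l) \<le> e" "0 \<le> u" "0 \<le> v" "u + v = 1"
  shows "norm (u *\<^sub>R a + v *\<^sub>R b - l) \<le> e"
proof -
  have "u *\<^sub>R a + v *\<^sub>R b - l = u *\<^sub>R (a - l) + v *\<^sub>R (b - l)"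
  proof -
    have "l = u *\<^sub>R l + v *\<^sub>R l" using assms(5) by (simp add: scaleR_add_left[symmetric])
    then show ?thesis by (simp add: algebra_simps)
  qed
  also have "norm \<dots> \<le> u * norm (a - l) + v * norm (b - l)"
    using assms(3,4) norm_triangle_ineq[of "u *\<^sub>R (a - l)" "v *\<^sub>R (b - l)"] by simp
  also have "\<dots> \<le> u * e + v * e"
    using assms by (intro add_mono mult_left_mono) auto
  also have "\<dots> = e" using assms(5) by (simp add: distrib_right[symmetric])
  finally show ?thesis .
qed

context
  fixes iV :: "'v::banach \<Rightarrow> 'a::real_vector"
    and iW :: "'w::banach \<Rightarrow> 'b::real_vector"
    and R :: "('a \<times> 'b) set"
  assumes gs: "gradient_space iV iW R"
begin

lemma linV: "linear iV" and linW: "linear iW" and grel: "gradient_relation R"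
  and reflW: "reflexive_space TYPE('w)"
  and Rlim: "\<And>u g us gs. (\<forall>i::nat. (iV (us i), iW (gs i)) \<in> R) \<Longrightarrow>
        (\<lambda>i. norm (u - us i)) \<longlonglongrightarrow> 0 \<Longrightarrow> (\<lambda>i. norm (g - gs i)) \<longlonglongrightarrow> 0
        \<Longrightarrow> (iV u, iW g) \<in> R"
  using gs unfolding gradient_space_def by blast+

lemma Radd: "(iV u, iW g) \<in> R \<Longrightarrow> (iV u', iW g') \<in> R \<Longrightarrow> (iV (u + u'), iW (g + g')) \<in> R"
  using grel unfolding gradient_relation_def by (simp add: linear_add[OF linV] linear_add[OF linW])

lemma Rsc: "(iV u, iW g) \<in> R \<Longrightarrow> \<alpha> > 0 \<Longrightarrow> (iV (\<alpha> *\<^sub>R u), iW (\<alpha> *\<^sub>R g)) \<in> R"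
  using grel unfolding gradient_relation_def by (simp add: linear_scale[OF linV] linear_scale[OF linW])

lemma Rconv:
  assumes "(iV u, iW g) \<in> R" "(iV u', iW g') \<in> R" "0 \<le> a" "0 \<le> b" "a + b = 1"
  shows "(iV (a *\<^sub>R u + b *\<^sub>R u'), iW (a *\<^sub>R g + b *\<^sub>R g')) \<in> R"
proof -
  consider "a = 0" | "b = 0" | "a > 0 \<and> b > 0" using assms(3,4) by linarith
  then show ?thesis
  proof cases
    case 1 then have "b = 1" using assms(5) by simp
    then show ?thesis using 1 assms(2) by simp
  next
    case 2 then have "a = 1" using assms(5) by simp
    then show ?thesis using 2 assms(1) by simp
  next
    case 3
    show ?thesis using Radd[OF Rsc[OF assms(1)] Rsc[OF assms(2)]] 3 by blast
  qed
qed

lemma approx: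
  assumes H: "\<And>e. e > 0 \<Longrightarrow> \<exists>u h. (iV u, iW h) \<in> R \<and> norm (u - l) \<le> e \<and> norm h \<le> m + e"
  shows "\<exists>g. (iV l, iW g) \<in> R \<and> norm g \<le> m"
proof -
  define A where "A n = {h. \<exists>u. (iV u, iW h) \<in> R \<and> norm (u - l) \<le> inverse (real (Suc n))
                          \<and> norm h \<le> m + inverse (real (Suc n))}" for n
  define C where "C n = closure (A n)" for n
  have Acvx: "convex (A n)" for n
  proof (rule convexI)
    fix h1 h2 and a b :: real
    assume h1: "h1 \<in> A n" and h2: "h2 \<in> A n" and ab: "0 \<le> a" "0 \<le> b" "a + b = 1"
    obtain u1 where u1: "(iV u1, iW h1) \<in> R" "norm (u1 - l) \<le> inverse (real (Suc n))"
      "norm h1 \<le> m + inverse (real (Suc n))" using h1 unfolding A_def by blast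
    obtain u2 where u2: "(iV u2, iW h2) \<in> R" "norm (u2 - l) \<le> inverse (real (Suc n))"
      "norm h2 \<le> m + inverse (real (Suc n))" using h2 unfolding A_def by blast
    have "(iV (a *\<^sub>R u1 + b *\<^sub>R u2), iW (a *\<^sub>R h1 + b *\<^sub>R h2)) \<in> R" by (rule Rconv[OF u1(1) u2(1) ab])
    moreover have "norm (a *\<^sub>R u1 + b *\<^sub>R u2 - l) \<le> inverse (real (Suc n))"
      by (rule conv_norm_le[OF u1(2) u2(2) ab])
    moreover have "norm (a *\<^sub>R h1 + b *\<^sub>R h2 - 0) \<le> m + inverse (real (Suc n))"
      by (rule conv_norm_le) (use u1(3) u2(3) ab in auto)
    ultimately show "a *\<^sub>R h1 + b *\<^sub>R h2 \<in> A n" unfolding A_def by auto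
  qed
  have Ane: "A n \<noteq> {}" for n
  proof -
    obtain u h where "(iV u, iW h) \<in> R" "norm (u - l) \<le> inverse (real (Suc n))"
      "norm h \<le> m + inverse (real (Suc n))" using H[of "inverse (real (Suc n))"] by auto
    then show ?thesis unfolding A_def by blast
  qed
  have inv_mono: "inverse (real (Suc (Suc n))) \<le> inverse (real (Suc n))" for n
    by (simp add: le_imp_inverse_le)
  have Adec: "A (Suc n) \<subseteq> A n" for n
  proof
    fix h assume "h \<in> A (Suc n)"
    then obtain u where u: "(iV u, iW h) \<in> R" "norm (u - l) \<le> inverse (real (Suc (Suc n)))"
      "norm h \<le> m + inverse (real (Suc (Suc n)))" unfolding A_def by blast
    have a: "norm (u - l) \<le> inverse (real (Suc n))" using u(2) inv_mono[of n] by (rule order_trans)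
    have b: "norm h \<le> m + inverse (real (Suc n))" using u(3) inv_mono[of n] by linarith
    show "h \<in> A n" unfolding A_def using u(1) a b by blast
  qed
  have Acb: "A n \<subseteq> cball 0 (m + inverse (real (Suc n)))" for n
    unfolding A_def by auto
  obtain g where g: "\<And>n. g \<in> C n"
  proof -
    have "\<exists>x. \<forall>n. x \<in> C n"
    proof (rule nested_reflexive[OF reflW])
      show "closed (C n)" for n unfolding C_def by simp
      show "convex (C n)" for n unfolding C_def using Acvx by simp
      show "C n \<noteq> {}" for n unfolding C_def using Ane by simp
      show "C (Suc n) \<subseteq> C n" for n unfolding C_def using Adec by (rule closure_mono)
      show "bounded (C 0)" unfolding C_def using Acb[of 0] by (intro bounded_closure bounded_subset[OF bounded_cball])
    qed
    then show ?thesis using that by blast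
  qed
  have gn: "norm g \<le> m + inverse (real (Suc n))" for n
  proof -
    have "C n \<subseteq> cball 0 (m + inverse (real (Suc n)))"
      unfolding C_def using Acb by (intro closure_minimal) auto
    then show ?thesis using g[of n] by auto
  qed
  have gm: "norm g \<le> m"
  proof (rule field_le_epsilon)
    fix e :: real assume "0 < e"
    then obtain n where "inverse (real (Suc n)) < e" using reals_Archimedean by blast
    then show "norm g \<le> m + e" using gn[of n] by simp
  qed
  have "\<forall>n. \<exists>u h. (iV u, iW h) \<in> R \<and> norm (u - l) \<le> inverse (real (Suc n)) \<and> dist h g < inverse (real (Suc n))"
  proof
    fix n
    have "g \<in> closure (A n)" using g[of n] unfolding C_def .
    then obtain h where h: "h \<in> A n" "dist h g < inverse (real (Suc n))"
      unfolding closure_approachable by (meson inverse_positive_iff_positive of_nat_0_less_iff zero_less_Suc)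
    then show "\<exists>u h. (iV u, iW h) \<in> R \<and> norm (u - l) \<le> inverse (real (Suc n)) \<and> dist h g < inverse (real (Suc n))"
      unfolding A_def by blast
  qed
  then have "\<exists>U. \<forall>n. \<exists>h. (iV (U n), iW h) \<in> R \<and> norm (U n - l) \<le> inverse (real (Suc n)) \<and> dist h g < inverse (real (Suc n))"
    by (rule choice)
  then obtain U where "\<forall>n. \<exists>h. (iV (U n), iW h) \<in> R \<and> norm (U n - l) \<le> inverse (real (Suc n)) \<and> dist h g < inverse (real (Suc n))"
    by blast
  then have "\<exists>Hs. \<forall>n. (iV (U n), iW (Hs n)) \<in> R \<and> norm (U n - l) \<le> inverse (real (Suc n)) \<and> dist (Hs n) g < inverse (real (Suc n))"
    by (rule choice)
  then obtain Hs where UH: "\<And>n. (iV (U n), iW (Hs n)) \<in> R" "\<And>n. norm (U n - l) \<le> inverse (real (Suc n))"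
    "\<And>n. dist (Hs n) g < inverse (real (Suc n))" by blast
  have "(iV l, iW g) \<in> R"
  proof (rule Rlim)
    show "\<forall>i. (iV (U i), iW (Hs i)) \<in> R" using UH(1) by blast
    show "(\<lambda>i. norm (l - U i)) \<longlonglongrightarrow> 0"
    proof (rule Lim_null_comparison[OF _ LIMSEQ_inverse_real_of_nat])
      show "\<forall>\<^sub>F i in sequentially. norm (norm (l - U i)) \<le> inverse (real (Suc i))"
        using UH(2) by (simp add: norm_minus_commute)
    qed
    show "(\<lambda>i. norm (g - Hs i)) \<longlonglongrightarrow> 0"
    proof (rule Lim_null_comparison[OF _ LIMSEQ_inverse_real_of_nat])
      show "\<forall>\<^sub>F i in sequentially. norm (norm (g - Hs i)) \<le> inverse (real (Suc i))"
        using UH(3) by (simp add: dist_norm norm_minus_commute less_imp_le)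
    qed
  qed
  then show ?thesis using gm by blast
qed

lemma mg_spec:
  assumes u: "u \<in> Sob iV iW R"
  shows "(iV u, iW (min_grad iV iW R u)) \<in> R \<and>
         (\<forall>g'. (iV u, iW g') \<in> R \<longrightarrow> norm (min_grad iV iW R u) \<le> norm g')"
proof -
  define N where "N = norm ` {g. (iV u, iW g) \<in> R}"
  define d where "d = Inf N"
  have Nne: "N \<noteq> {}" using u unfolding N_def Sob_def by blast
  have Nbdd: "bdd_below N" unfolding N_def by (rule bdd_belowI[of _ 0]) auto
  have dle: "d \<le> norm g'" if "(iV u, iW g') \<in> R" for g'
    unfolding d_def using that Nbdd by (intro cInf_lower) (auto simp: N_def)
  have "\<exists>g. (iV u, iW g) \<in> R \<and> norm g \<le> d"
  proof (rule approx)
    fix e :: real assume e: "e > 0"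
    have "Inf N < d + e" using e unfolding d_def by simp
    then obtain n where "n \<in> N" "n < d + e" using cInf_less_iff[OF Nne Nbdd] unfolding d_def by blast
    then obtain g where "(iV u, iW g) \<in> R" "norm g < d + e" unfolding N_def by blast
    then show "\<exists>u' h. (iV u', iW h) \<in> R \<and> norm (u' - u) \<le> e \<and> norm h \<le> d + e"
      using e by (intro exI[of _ u] exI[of _ g]) auto
  qed
  then have ex: "\<exists>g. (iV u, iW g) \<in> R \<and> (\<forall>g'. (iV u, iW g') \<in> R \<longrightarrow> norm g \<le> norm g')"
    using dle order_trans by blast
  show ?thesis unfolding min_grad_def by (rule someI_ex[OF ex])
qed

lemma Sob_scale: "u \<in> Sob iV iW R \<Longrightarrow> \<alpha> > 0 \<Longrightarrow> \<alpha> *\<^sub>R u \<in> Sob iV iW R"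
  unfolding Sob_def using Rsc by blast

lemma mg_hom:
  assumes u: "u \<in> Sob iV iW R" and a: "\<alpha> > 0"
  shows "norm (min_grad iV iW R (\<alpha> *\<^sub>R u)) = \<alpha> * norm (min_grad iV iW R u)"
proof -
  let ?g = "min_grad iV iW R u" and ?h = "min_grad iV iW R (\<alpha> *\<^sub>R u)"
  have su: "\<alpha> *\<^sub>R u \<in> Sob iV iW R" by (rule Sob_scale[OF u a])
  have 1: "norm ?h \<le> norm (\<alpha> *\<^sub>R ?g)"
    using mg_spec[OF su] Rsc[OF conjunct1[OF mg_spec[OF u]] a] by blast
  have "(iV ((1/\<alpha>) *\<^sub>R (\<alpha> *\<^sub>R u)), iW ((1/\<alpha>) *\<^sub>R ?h)) \<in> R"
    using Rsc[OF conjunct1[OF mg_spec[OF su]], of "1/\<alpha>"] a by simp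
  then have "(iV u, iW ((1/\<alpha>) *\<^sub>R ?h)) \<in> R" using a by simp
  then have 2: "norm ?g \<le> norm ((1/\<alpha>) *\<^sub>R ?h)" using mg_spec[OF u] by blast
  have "\<alpha> * norm ?g \<le> norm ?h" using 2 a by (simp add: field_simps)
  then show ?thesis using 1 a by simp
qed

end




theorem mainTheorem12:
  fixes iV :: "'v::banach \<Rightarrow> 'a::real_vector"
    and iW :: "'w::banach \<Rightarrow> 'b::real_vector"
    and R :: "('a \<times> 'b) set"
    and K :: "'v set"
  assumes "gradient_space iV iW R"
    and "RK_cone iV iW R K"
    and "regular_cone iV iW R K"
    and "\<exists>v \<in> K. v \<noteq> 0"
  shows "\<exists>u \<in> K. u \<noteq> 0 \<and>
           norm (min_grad iV iW R u) / norm u =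
             (INF v \<in> {v \<in> K. v \<noteq> 0}. norm (min_grad iV iW R v) / norm v) \<and>
           (INF v \<in> {v \<in> K. v \<noteq> 0}. norm (min_grad iV iW R v) / norm v) > 0"
proof -
  note gs = assms(1)
  have KS: "K \<subseteq> Sob iV iW R" and Kc: "\<And>u \<alpha>. u \<in> K \<Longrightarrow> \<alpha> > 0 \<Longrightarrow> \<alpha> *\<^sub>R u \<in> K"
    using assms(2) unfolding RK_cone_def is_cone_def by blast+
  have RK0: "\<forall>us :: nat \<Rightarrow> 'v. (\<forall>i. us i \<in> K) \<and> bounded (range us) \<and>
        bounded (range (\<lambda>i. min_grad iV iW R (us i)))
        \<longrightarrow> (\<exists>r l. strict_mono r \<and> l \<in> K \<and> (us \<circ> r) \<longlonglongrightarrow> l)"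
    using assms(2) unfolding RK_cone_def by (rule conjunct2)
  have reg: "\<And>u. u \<in> K \<Longrightarrow> min_grad iV iW R u = 0 \<Longrightarrow> u = 0"
    using assms(3) unfolding regular_cone_def by blast
  define S where "S = {v \<in> K. v \<noteq> 0}"
  define Q where "Q v = norm (min_grad iV iW R v) / norm v" for v
  define m where "m = (INF v \<in> S. Q v)"
  have Sne: "S \<noteq> {}" using assms(4) unfolding S_def by blast
  have Qbdd: "bdd_below (Q ` S)" unfolding Q_def by (rule bdd_belowI[of _ 0]) auto
  have "\<forall>n. \<exists>v. v \<in> S \<and> Q v < m + inverse (real (Suc n))"
  proof
    fix n
    have "(INF v \<in> S. Q v) < m + inverse (real (Suc n))" unfolding m_def by simp
    then show "\<exists>v. v \<in> S \<and> Q v < m + inverse (real (Suc n))"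
      using cINF_less_iff[OF Sne Qbdd] by blast
  qed
  then obtain vs where vs: "\<And>n. vs n \<in> S" "\<And>n. Q (vs n) < m + inverse (real (Suc n))"
    using choice[of "\<lambda>n v. v \<in> S \<and> Q v < m + inverse (real (Suc n))"] by blast
  define ws where "ws n = (1 / norm (vs n)) *\<^sub>R vs n" for n
  have vsK: "vs n \<in> K" and vs0: "vs n \<noteq> 0" for n using vs(1)[of n] unfolding S_def by auto
  have wsK: "ws n \<in> K" for n unfolding ws_def using Kc[OF vsK] vs0 by simp
  have wsn: "norm (ws n) = 1" for n unfolding ws_def using vs0[of n] by simp
  have wsQ: "norm (min_grad iV iW R (ws n)) = Q (vs n)" for n
    unfolding ws_def Q_def using mg_hom[OF gs subsetD[OF KS vsK[of n]], of "1 / norm (vs n)"] vs0[of n]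
    by simp
  have wsm: "norm (min_grad iV iW R (ws n)) < m + inverse (real (Suc n))" for n
    using wsQ vs(2) by simp
  have inv_le1: "inverse (real (Suc n)) \<le> 1" for n by (simp add: inverse_le_1_iff)
  have b1: "bounded (range ws)" unfolding bounded_iff using wsn by (intro exI[of _ 1]) auto
  have wsb: "norm (min_grad iV iW R (ws n)) \<le> m + 1" for n
    using wsm[of n] inv_le1[of n] by linarith
  have b2: "bounded (range (\<lambda>i. min_grad iV iW R (ws i)))"
    unfolding bounded_iff using wsb by (intro exI[of _ "m + 1"]) auto
  obtain r l where r: "strict_mono r" and lK: "l \<in> K" and lim: "(ws \<circ> r) \<longlonglongrightarrow> l"
  proof -
    have "\<exists>r l. strict_mono r \<and> l \<in> K \<and> (ws \<circ> r) \<longlonglongrightarrow> l"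
      by (rule RK0[rule_format]) (use wsK b1 b2 in blast)
    then show ?thesis using that by blast
  qed
  have "(\<lambda>n. norm ((ws \<circ> r) n)) \<longlonglongrightarrow> norm l" using lim by (rule tendsto_norm)
  moreover have "(\<lambda>n. norm ((ws \<circ> r) n)) = (\<lambda>n. 1)" using wsn by (simp add: o_def)
  ultimately have "(\<lambda>n. 1::real) \<longlonglongrightarrow> norm l" by simp
  then have ln: "norm l = 1" by (rule LIMSEQ_unique[OF _ tendsto_const])
  have l0: "l \<noteq> 0" using ln by auto
  have lS: "l \<in> S" unfolding S_def using lK l0 by simp
  have "\<exists>g. (iV l, iW g) \<in> R \<and> norm g \<le> m"
  proof (rule approx[OF gs])
    fix e :: real assume e: "e > 0"
    obtain N where N: "\<And>n. n \<ge> N \<Longrightarrow> dist ((ws \<circ> r) n) l < e"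
      using lim e unfolding lim_sequentially by blast
    obtain N' where N': "inverse (real (Suc N')) < e" using reals_Archimedean[OF e] by blast
    define n where "n = max N N'"
    have rn: "n \<le> r n" using r by (rule seq_suble)
    have "inverse (real (Suc (r n))) \<le> inverse (real (Suc N'))"
      using rn unfolding n_def by (simp add: le_imp_inverse_le)
    then have ie: "inverse (real (Suc (r n))) < e" using N' by linarith
    have d: "norm (ws (r n) - l) < e" using N[of n] unfolding n_def by (simp add: dist_norm)
    have R1: "(iV (ws (r n)), iW (min_grad iV iW R (ws (r n)))) \<in> R"
      using mg_spec[OF gs subsetD[OF KS wsK[of "r n"]]] by blast
    have "norm (min_grad iV iW R (ws (r n))) \<le> m + e" using wsm[of "r n"] ie by simp
    then show "\<exists>u h. (iV u, iW h) \<in> R \<and> norm (u - l) \<le> e \<and> norm h \<le> m + e"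
      using R1 d by (intro exI[of _ "ws (r n)"] exI[of _ "min_grad iV iW R (ws (r n))"]) auto
  qed
  then obtain g where g: "(iV l, iW g) \<in> R" "norm g \<le> m" by blast
  have "norm (min_grad iV iW R l) \<le> norm g"
    using mg_spec[OF gs subsetD[OF KS lK]] g(1) by blast
  then have Ql: "Q l \<le> m" using g(2) ln unfolding Q_def by simp
  have "m \<le> Q l" unfolding m_def by (rule cINF_lower[OF Qbdd lS])
  then have Qeq: "Q l = m" using Ql by simp
  have mpos: "m > 0"
  proof (rule ccontr)
    assume "\<not> m > 0"
    then have "norm (min_grad iV iW R l) \<le> 0" using Qeq ln unfolding Q_def by simp
    then have "min_grad iV iW R l = 0" by simp
    then show False using reg[OF lK] l0 by blast
  qed
  show ?thesis
  proof (rule bexI[OF _ lK])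
    show "l \<noteq> 0 \<and> norm (min_grad iV iW R l) / norm l = (INF v \<in> {v \<in> K. v \<noteq> 0}. norm (min_grad iV iW R v) / norm v) \<and>
      (INF v \<in> {v \<in> K. v \<noteq> 0}. norm (min_grad iV iW R v) / norm v) > 0"
      using l0 Qeq mpos unfolding Q_def m_def S_def by simp
  qed
qed


end
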